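(* Let $m\ge 2$ be an integer, and let $A\ge 1$, $B\ge 0$, $C\ge 1$ be integers such that $p(An+B)\equiv 0 \pmod{C}$ for all integers $n\ge 0$. If $B<A$ and $A\mid m$, then for every positive integer $k$ and every integer $n\ge 0$, $$o_{\rho,m}(An+B,k)\equiv 0 \pmod{C}.$$
   Context: $p(n)$ denotes the number of partitions of $n$. Part-frequency matrices: fix an integer modulus $m\ge 2$. Every positive integer $N$ can be written uniquely as $N=jm^k$ with $k\ge 0$ and $m\nmid j$. For a partition $\lambda$, write the number of times the part $N$ occurs in base $m$ as $\sum_{\ell\ge 0} a_{N,\ell}m^\ell$ with digits $a_{N,\ell}\in\{0,\dots,m-1\}$. For each $j\ge 1$ with $m\nmid j$, let $M_j$ be the infinite matrix, with rows and columns indexed from $0$, whose entry in row $k$, column $\ell$ is $a_{jm^k,\ell}$. The partition is recovered from the sequence $(M_j)$; an entry $a$ at position $(k,\ell)$ of $M_j$ contributes $a\cdot j\cdot m^{k+\ell}$ to the weight of the partition. The map $\rho$ (depending on $m$): apply to every matrix $M_j$ the following rotation of each antidiagonal. The entry at position $(k,\ell)$ with $\ell\ge 1$ moves to position $(k+1,\ell-1)$, and the entry at position $(k,0)$ moves to position $(0,k)$. The resulting sequence of matrices defines a new partition of the same integer, so $\rho$ is a permutation of the finite set of partitions of $n$. $o_{\rho,m}(n,k)$ denotes the number of orbits of size $k$ of $\rho$ (with modulus $m$) acting on the set of partitions of $n$. *)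

theory Defs
  imports Main
begin

text \<open>A partition of n is represented by its multiplicity function f:
  f N is the number of times the part N occurs (parts are positive, so f 0 = 0).\<close>
definition partitions :: "nat \<Rightarrow> (nat \<Rightarrow> nat) set" where
  "partitions n = {f. f 0 = 0 \<and> (\<forall>N>n. f N = 0) \<and> (\<Sum>N\<le>n. N * f N) = n}"

definition num_partitions :: "nat \<Rightarrow> nat" where
  "num_partitions n = card (partitions n)"

definition decomp :: "nat \<Rightarrow> nat \<Rightarrow> nat \<times> nat" where
  "decomp m N = (THE (j, k). N = j * m ^ k \<and> \<not> m dvd j)"

text \<open>Part-frequency matrix M_j: entry (k,l) is the l-th base-m digit of the
  multiplicity of the part j*m^k.\<close>
definition pf_matrix :: "nat \<Rightarrow> (nat \<Rightarrow> nat) \<Rightarrow> nat \<Rightarrow> nat \<Rightarrow> nat \<Rightarrow> nat" where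
  "pf_matrix m f j k l = (f (j * m ^ k) div m ^ l) mod m"

text \<open>Antidiagonal rotation: the entry at (k,l), l \<ge> 1, moves to (k+1,l-1);
  the entry at (k,0) moves to (0,k). Expressed via the preimage of each position.\<close>
definition rotate_matrix :: "(nat \<Rightarrow> nat \<Rightarrow> nat) \<Rightarrow> nat \<Rightarrow> nat \<Rightarrow> nat" where
  "rotate_matrix M k l = (if k \<ge> 1 then M (k - 1) (l + 1) else M l 0)"

definition digits_value :: "nat \<Rightarrow> (nat \<Rightarrow> nat) \<Rightarrow> nat" where
  "digits_value m d = (\<Sum>l\<in>{l. d l \<noteq> 0}. d l * m ^ l)"

text \<open>The map rho: rotate every matrix M_j and read off the new partition.\<close>
definition rho :: "nat \<Rightarrow> (nat \<Rightarrow> nat) \<Rightarrow> (nat \<Rightarrow> nat)" where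
  "rho m f N = (if N = 0 then 0 else
     (case decomp m N of (j, k) \<Rightarrow> digits_value m (rotate_matrix (pf_matrix m f j) k)))"

definition rho_orbit :: "nat \<Rightarrow> (nat \<Rightarrow> nat) \<Rightarrow> (nat \<Rightarrow> nat) set" where
  "rho_orbit m f = {(rho m ^^ i) f | i. True}"

definition orbit_count :: "nat \<Rightarrow> nat \<Rightarrow> nat \<Rightarrow> nat" where
  "orbit_count m n k = card {X \<in> rho_orbit m ` partitions n. card X = k}"

end

theory Submission
  imports Defs
begin

definition dz :: "nat \<Rightarrow> (nat \<Rightarrow> nat) \<Rightarrow> nat \<Rightarrow> nat" where
  "dz m f = (\<lambda>N. if m dvd N then 0 else f N mod m)"
definition addf :: "(nat \<Rightarrow> nat) \<Rightarrow> (nat \<Rightarrow> nat) \<Rightarrow> nat \<Rightarrow> nat" where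
  "addf g h = (\<lambda>N. g N + h N)"
definition fsb :: "(nat \<Rightarrow> nat) \<Rightarrow> bool" where
  "fsb f = (\<exists>b. \<forall>N>b. f N = 0)"

lemma decomp_exists:
  fixes m N :: nat assumes "m \<ge> 2" "N > 0" shows "\<exists>j k. N = j * m ^ k \<and> \<not> m dvd j"
  using assms(2)
proof (induction N rule: less_induct)
  case (less N)
  show ?case
  proof (cases "m dvd N")
    case True
    then obtain N' where N': "N = m * N'" by auto
    with less.prems have "N' > 0" "N' < N" using assms(1) by auto
    with less.IH obtain j k where "N' = j * m ^ k" "\<not> m dvd j" by blast
    with N' show ?thesis by (intro exI[of _ j] exI[of _ "Suc k"]) auto
  next
    case False
    then show ?thesis by (intro exI[of _ N] exI[of _ 0]) auto
  qed
qed

lemma decomp_uniq_aux: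
  fixes m j k j' k' :: nat
  assumes "m \<ge> 2" "j * m ^ k = j' * m ^ k'" "\<not> m dvd j" "\<not> m dvd j'" "k \<le> k'"
  shows "j = j' \<and> k = k'"
proof -
  have "m ^ k' = m ^ k * m ^ (k' - k)" using assms(5) by (metis le_add_diff_inverse power_add)
  with assms(2) have "j * m ^ k = (j' * m ^ (k' - k)) * m ^ k" by (simp add: ac_simps)
  then have e: "j = j' * m ^ (k' - k)" using assms(1) by (metis mult_right_cancel not_numeral_le_zero power_not_zero)
  show ?thesis
  proof (cases "k' = k")
    case True then show ?thesis using e by simp
  next
    case False
    then have "m dvd m ^ (k' - k)" using assms(5) by simp
    then have "m dvd j" using e by simp
    with assms(3) show ?thesis by simp
  qed
qed

lemma decomp_eq:
  fixes m N j k :: nat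
  assumes "m \<ge> 2" "N = j * m ^ k" "\<not> m dvd j"
  shows "decomp m N = (j, k)"
proof -
  have "(THE (j, k). N = j * m ^ k \<and> \<not> m dvd j) = (j, k)"
  proof (rule the_equality)
    show "case (j, k) of (j, k) \<Rightarrow> N = j * m ^ k \<and> \<not> m dvd j" using assms by simp
  next
    fix x assume "case x of (j', k') \<Rightarrow> N = j' * m ^ k' \<and> \<not> m dvd j'"
    then obtain j' k' where x: "x = (j', k')" "N = j' * m ^ k'" "\<not> m dvd j'" by auto
    have "j = j' \<and> k = k'"
    proof (cases "k \<le> k'")
      case True then show ?thesis using decomp_uniq_aux[OF assms(1) _ assms(3) x(3), of k k'] assms x by auto
    next
      case False then show ?thesis using decomp_uniq_aux[OF assms(1) _ x(3) assms(3), of k' k] assms x by auto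
    qed
    then show "x = (j, k)" using x by simp
  qed
  then show ?thesis by (simp add: decomp_def)
qed

lemma digits_value_bound:
  assumes "\<forall>l\<ge>L. d l = 0"
  shows "digits_value m d = (\<Sum>l<L. d l * m ^ l)"
proof -
  have sub: "{l. d l \<noteq> 0} \<subseteq> {..<L}" using assms by (auto simp: not_less[symmetric])
  show ?thesis unfolding digits_value_def
    by (rule sum.mono_neutral_left) (use sub in auto)
qed

lemma digits_value_nz:
  assumes "digits_value m d \<noteq> 0" shows "\<exists>l. d l \<noteq> 0"
  using assms unfolding digits_value_def by (metis (mono_tags, lifting) empty_Collect_eq sum.empty)

lemma pow_gt: "m \<ge> 2 \<Longrightarrow> l < (m::nat) ^ l"
proof (induction l)
  case 0 then show ?case by simp
next
  case (Suc l) then show ?case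
    by (metis less_exp dual_order.strict_trans1 power_increasing_iff less_2_cases_iff nat_less_le one_less_numeral_iff semiring_norm(76) order.strict_trans2 power_mono zero_le)
qed

lemma rho_at:
  fixes m N j k :: nat
  assumes "m \<ge> 2" "N = j * m ^ k" "\<not> m dvd j"
  shows "rho m f N = digits_value m (rotate_matrix (pf_matrix m f j) k)"
proof -
  have "j \<noteq> 0" using assms(3) by (metis dvd_0_right)
  then have "N \<noteq> 0" using assms by simp
  then show ?thesis using decomp_eq[OF assms] by (simp add: rho_def)
qed

lemma supp_rot:
  fixes m j k b :: nat
  assumes "m \<ge> 2" "\<forall>N>b. f N = 0" "\<not> m dvd j"
  shows "\<forall>l \<ge> b + f (j * m ^ (k - 1)) + 1. rotate_matrix (pf_matrix m f j) k l = 0"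
proof (intro allI impI)
  fix l assume l: "b + f (j * m ^ (k - 1)) + 1 \<le> l"
  have j: "j \<ge> 1" using assms(3) by (metis dvd_0_right less_one not_le)
  show "rotate_matrix (pf_matrix m f j) k l = 0"
  proof (cases "k \<ge> 1")
    case True
    have "f (j * m ^ (k - 1)) < l + 1" using l by simp
    also have "l + 1 < m ^ (l + 1)" using pow_gt[OF assms(1)] by blast
    finally have "f (j * m ^ (k - 1)) div m ^ (l + 1) = 0" by simp
    then show ?thesis using True by (simp add: rotate_matrix_def pf_matrix_def)
  next
    case False
    have "b < l" using l by simp
    also have "l < m ^ l" using pow_gt[OF assms(1)] by blast
    also have "m ^ l \<le> j * m ^ l" using j by simp
    finally have "f (j * m ^ l) = 0" using assms(2) by blast
    then show ?thesis using False by (simp add: rotate_matrix_def pf_matrix_def)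
  qed
qed

lemma rho_nonmult:
  fixes m N :: nat
  assumes "m \<ge> 2" "\<not> m dvd N" "\<forall>N>b. f N = 0"
  shows "rho m f N mod m = f N mod m"
proof -
  define d where "d = rotate_matrix (pf_matrix m f N) 0"
  define L where "L = b + f (N * m ^ (0 - 1))"
  have r: "rho m f N = digits_value m d" unfolding d_def using rho_at[OF assms(1) _ assms(2), of N 0] by simp
  have "\<forall>l \<ge> Suc L. d l = 0" using supp_rot[OF assms(1) assms(3) assms(2), of 0] unfolding d_def L_def by simp
  then have "digits_value m d = (\<Sum>l<Suc L. d l * m ^ l)" by (rule digits_value_bound)
  also have "\<dots> = d 0 + (\<Sum>l<L. d (Suc l) * m ^ Suc l)" by (simp add: sum.lessThan_Suc_shift del: sum.lessThan_Suc)
  also have "\<dots> = d 0 + m * (\<Sum>l<L. d (Suc l) * m ^ l)" by (simp add: sum_distrib_left ac_simps)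
  finally have "rho m f N mod m = d 0 mod m" using r by simp
  moreover have "d 0 = f N mod m" unfolding d_def by (simp add: rotate_matrix_def pf_matrix_def)
  ultimately show ?thesis by simp
qed

lemma dz_rho:
  assumes "m \<ge> 2" "fsb f" shows "dz m (rho m f) = dz m f"
proof -
  obtain b where b: "\<forall>N>b. f N = 0" using assms(2) fsb_def by auto
  show ?thesis unfolding dz_def using rho_nonmult[OF assms(1) _ b] by auto
qed

lemma fsb_rho:
  fixes m :: nat
  assumes "m \<ge> 2" "fsb f" shows "fsb (rho m f)"
proof -
  obtain b where b: "\<forall>N>b. f N = 0" using assms(2) fsb_def by auto
  have "\<forall>N > m * b. rho m f N = 0"
  proof (intro allI impI)
    fix N assume N: "N > m * b"
    then have "N > 0" by simp
    then obtain j k where jk: "N = j * m ^ k" "\<not> m dvd j" using decomp_exists[OF assms(1)] by blast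
    have j: "j \<ge> 1" using jk(2) by (metis dvd_0_right less_one not_le)
    show "rho m f N = 0"
    proof (rule ccontr)
      assume "rho m f N \<noteq> 0"
      then obtain l where l: "rotate_matrix (pf_matrix m f j) k l \<noteq> 0"
        using digits_value_nz rho_at[OF assms(1) jk] by metis
      show False
      proof (cases "k \<ge> 1")
        case True
        then have "f (j * m ^ (k - 1)) div m ^ (l+1) mod m \<noteq> 0" using l by (simp add: rotate_matrix_def pf_matrix_def)
        then have "f (j * m ^ (k - 1)) \<noteq> 0" by (metis div_0 mod_0)
        then have "j * m ^ (k - 1) \<le> b" using b by (meson not_le)
        then have "m * (j * m ^ (k - 1)) \<le> m * b" by simp
        moreover have "m * (j * m ^ (k - 1)) = N" using jk True
          by (metis (no_types, lifting) Suc_diff_le diff_Suc_1 mult.left_commute power_Suc)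
        ultimately show False using N by linarith
      next
        case False
        then have k: "k = 0" by simp
        then have "f (j * m ^ l) mod m \<noteq> 0" using l by (simp add: rotate_matrix_def pf_matrix_def)
        then have "f (j * m ^ l) \<noteq> 0" by (metis mod_0)
        then have "j * m ^ l \<le> b" using b by (meson not_le)
        moreover have "j \<le> j * m ^ l" using assms(1) by simp
        moreover have "b \<le> m * b" using assms(1) by simp
        moreover have "N = j" using jk k by simp
        ultimately show False using N by linarith
      qed
    qed
  qed
  then show ?thesis unfolding fsb_def by blast
qed

lemma addf_digits:
  fixes m M :: nat
  assumes "m \<ge> 2" "dz m g = g" "dz m h = (\<lambda>_. 0)"
  shows "(g M + h M) mod m = g M + h M mod m" and "l \<ge> 1 \<Longrightarrow> (g M + h M) div m ^ l = h M div m ^ l"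
proof -
  have gM: "g M = (if m dvd M then 0 else g M mod m)" using fun_cong[OF assms(2), of M] by (simp add: dz_def)
  have hM: "\<not> m dvd M \<Longrightarrow> h M mod m = 0" using fun_cong[OF assms(3), of M] by (simp add: dz_def split: if_splits)
  have "(g M + h M) mod m = g M + h M mod m \<and> (l \<ge> 1 \<longrightarrow> (g M + h M) div m ^ l = h M div m ^ l)"
  proof (cases "m dvd M")
    case True then show ?thesis using gM by simp
  next
    case False
    then obtain c where c: "h M = m * c" using hM by (metis mod_eq_0_iff_dvd dvd_def)
    have lt: "g M < m" using gM False assms(1) by (metis mod_less_divisor not_numeral_le_zero not_gr_zero)
    have d1: "(g M + h M) div m = c" using lt c assms(1) by simp
    have m1: "(g M + h M) mod m = g M" using lt c by simp
    show ?thesis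
    proof (intro conjI impI)
      show "(g M + h M) mod m = g M + h M mod m" using m1 c by simp
      assume "l \<ge> 1"
      then have ml: "m ^ l = m * m ^ (l - 1)" by (metis Suc_diff_le diff_Suc_1 power_Suc)
      have "(g M + h M) div m ^ l = c div m ^ (l - 1)" using d1 ml by (simp add: div_mult2_eq)
      moreover have "h M div m ^ l = c div m ^ (l - 1)" using c ml assms(1) by (simp add: div_mult2_eq)
      ultimately show "(g M + h M) div m ^ l = h M div m ^ l" by simp
    qed
  qed
  then show "(g M + h M) mod m = g M + h M mod m" and "l \<ge> 1 \<Longrightarrow> (g M + h M) div m ^ l = h M div m ^ l" by auto
qed

lemma pf_add:
  fixes m :: nat
  assumes "m \<ge> 2" "dz m g = g" "dz m h = (\<lambda>_. 0)"
  shows "pf_matrix m (addf g h) j k l = (if l = 0 then g (j * m ^ k) else 0) + pf_matrix m h j k l"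
proof (cases "l = 0")
  case True then show ?thesis using addf_digits(1)[OF assms] by (simp add: pf_matrix_def addf_def)
next
  case False then show ?thesis using addf_digits(2)[OF assms, of l] by (simp add: pf_matrix_def addf_def)
qed

lemma rot_add:
  fixes m :: nat
  assumes "m \<ge> 2" "dz m g = g" "dz m h = (\<lambda>_. 0)"
  shows "rotate_matrix (pf_matrix m (addf g h) j) k l = (if k = 0 \<and> l = 0 then g j else 0) + rotate_matrix (pf_matrix m h j) k l"
proof (cases "k \<ge> 1")
  case True then show ?thesis using pf_add[OF assms] by (simp add: rotate_matrix_def)
next
  case False
  have "l \<ge> 1 \<Longrightarrow> g (j * m ^ l) = 0"
  proof -
    assume "l \<ge> 1"
    then have "m dvd j * m ^ l" by (simp add: dvd_power)
    then show ?thesis using fun_cong[OF assms(2), of "j * m ^ l"] by (simp add: dz_def)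
  qed
  then show ?thesis using False pf_add[OF assms] by (auto simp: rotate_matrix_def)
qed

lemma digits_value_add0:
  assumes "\<forall>l\<ge>L. d l = 0"
  shows "digits_value m (\<lambda>l. (if l = 0 then a else 0) + d l) = a + digits_value m d"
proof -
  have "\<forall>l\<ge>Suc L. (if l = 0 then a else 0) + d l = 0" using assms by auto
  then have "digits_value m (\<lambda>l. (if l = 0 then a else 0) + d l) = (\<Sum>l<Suc L. ((if l = 0 then a else 0) + d l) * m ^ l)"
    by (rule digits_value_bound)
  also have "\<dots> = (\<Sum>l<Suc L. (if l = 0 then a else 0) * m ^ l) + (\<Sum>l<Suc L. d l * m ^ l)"
    by (simp add: distrib_right sum.distrib)
  also have "(\<Sum>l<Suc L. (if l = 0 then a else 0) * m ^ l) = a"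
    by (simp add: sum.lessThan_Suc_shift del: sum.lessThan_Suc)
  also have "(\<Sum>l<Suc L. d l * m ^ l) = digits_value m d"
    using assms by (intro digits_value_bound[symmetric]) auto
  finally show ?thesis .
qed

lemma rho_add:
  fixes m :: nat
  assumes "m \<ge> 2" "dz m g = g" "dz m h = (\<lambda>_. 0)" "fsb h"
  shows "rho m (addf g h) = addf g (rho m h)"
proof
  fix N
  obtain b where b: "\<forall>N>b. h N = 0" using assms(4) fsb_def by auto
  have g0: "g 0 = 0" using fun_cong[OF assms(2), of 0] by (simp add: dz_def)
  show "rho m (addf g h) N = addf g (rho m h) N"
  proof (cases "N = 0")
    case True then show ?thesis using g0 by (simp add: rho_def addf_def)
  next
    case False
    then obtain j k where jk: "N = j * m ^ k" "\<not> m dvd j" using decomp_exists[OF assms(1)] by blast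
    define d where "d = rotate_matrix (pf_matrix m h j) k"
    have sup: "\<forall>l \<ge> b + h (j * m ^ (k - 1)) + 1. d l = 0"
      using supp_rot[OF assms(1) b jk(2)] unfolding d_def by blast
    have "rho m (addf g h) N = digits_value m (rotate_matrix (pf_matrix m (addf g h) j) k)"
      by (rule rho_at[OF assms(1) jk])
    also have "rotate_matrix (pf_matrix m (addf g h) j) k = (\<lambda>l. (if l = 0 then (if k = 0 then g j else 0) else 0) + d l)"
      unfolding d_def using rot_add[OF assms(1-3)] by auto
    also have "digits_value m \<dots> = (if k = 0 then g j else 0) + digits_value m d"
      by (rule digits_value_add0[OF sup])
    also have "digits_value m d = rho m h N" unfolding d_def by (rule rho_at[OF assms(1) jk, symmetric])
    also have "(if k = 0 then g j else 0) = g N"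
    proof (cases "k = 0")
      case True then show ?thesis using jk by simp
    next
      case False
      then have "m dvd N" using jk by (simp add: dvd_power)
      then show ?thesis using False fun_cong[OF assms(2), of N] by (simp add: dz_def)
    qed
    finally show ?thesis by (simp add: addf_def)
  qed
qed

lemma dz_addf:
  assumes "dz m g = g" "dz m h = (\<lambda>_. 0)"
  shows "dz m (addf g h) = g"
proof
  fix N
  have gN: "g N = (if m dvd N then 0 else g N mod m)" using fun_cong[OF assms(1), of N] by (simp add: dz_def)
  have hM: "\<not> m dvd N \<Longrightarrow> h N mod m = 0" using fun_cong[OF assms(2), of N] by (simp add: dz_def split: if_splits)
  show "dz m (addf g h) N = g N"
  proof (cases "m dvd N")
    case True then show ?thesis using gN by (simp add: dz_def)
  next
    case False then show ?thesis using gN hM by (simp add: dz_def addf_def mod_add_eq[symmetric])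
  qed
qed

lemma iter_add:
  fixes m :: nat
  assumes "m \<ge> 2" "dz m g = g" "dz m h = (\<lambda>_. 0)" "fsb h"
  shows "(rho m ^^ i) (addf g h) = addf g ((rho m ^^ i) h) \<and> dz m ((rho m ^^ i) h) = (\<lambda>_. 0) \<and> fsb ((rho m ^^ i) h)"
proof (induction i)
  case 0 then show ?case using assms by simp
next
  case (Suc i)
  then show ?case using rho_add[OF assms(1,2)] dz_rho[OF assms(1)] fsb_rho[OF assms(1)] by simp
qed

lemma orbit_add:
  fixes m :: nat
  assumes "m \<ge> 2" "dz m g = g" "dz m h = (\<lambda>_. 0)" "fsb h"
  shows "rho_orbit m (addf g h) = addf g ` rho_orbit m h"
  using iter_add[OF assms] unfolding rho_orbit_def by auto

lemma orbit_dz: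
  fixes m :: nat
  assumes "m \<ge> 2" "dz m g = g" "dz m h = (\<lambda>_. 0)" "fsb h" "x \<in> rho_orbit m (addf g h)"
  shows "dz m x = g"
  using assms(5) iter_add[OF assms(1-4)] dz_addf[OF assms(2)] unfolding rho_orbit_def by auto

lemma part_bound: "f \<in> partitions n \<Longrightarrow> \<forall>N>n. f N = 0"
  by (simp add: partitions_def)

lemma part_iff:
  fixes n b :: nat
  assumes "n \<le> b" "\<forall>N>b. f N = 0"
  shows "f \<in> partitions n \<longleftrightarrow> f 0 = 0 \<and> (\<Sum>N\<le>b. N * f N) = n"
proof -
  have split: "(\<Sum>N\<le>b. N * f N) = (\<Sum>N\<le>n. N * f N) + (\<Sum>N\<in>{n<..b}. N * f N)"
  proof -
    have "{..b} = {..n} \<union> {n<..b}" using assms(1) by auto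
    moreover have "(\<Sum>N\<in>{..n} \<union> {n<..b}. N * f N) = (\<Sum>N\<le>n. N * f N) + (\<Sum>N\<in>{n<..b}. N * f N)"
      by (rule sum.union_disjoint) auto
    ultimately show ?thesis by simp
  qed
  show ?thesis
  proof
    assume f: "f \<in> partitions n"
    then have "(\<Sum>N\<in>{n<..b}. N * f N) = 0" by (simp add: partitions_def)
    then show "f 0 = 0 \<and> (\<Sum>N\<le>b. N * f N) = n" using f split by (simp add: partitions_def)
  next
    assume f: "f 0 = 0 \<and> (\<Sum>N\<le>b. N * f N) = n"
    have z: "\<forall>N>n. f N = 0"
    proof (intro allI impI)
      fix N assume N: "N > n"
      show "f N = 0"
      proof (cases "N \<le> b")
        case True
        have "N * f N \<le> (\<Sum>N\<le>b. N * f N)"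
          using True by (intro member_le_sum) auto
        then have "N * f N \<le> n" using f by simp
        then show ?thesis using N by (cases "f N") auto
      next
        case False then show ?thesis using assms(2) by simp
      qed
    qed
    then have "(\<Sum>N\<in>{n<..b}. N * f N) = 0" by simp
    then show "f \<in> partitions n" using f z split by (simp add: partitions_def)
  qed
qed

lemma finite_partitions: "finite (partitions n)"
proof -
  have "partitions n \<subseteq> {f. \<forall>x. (x \<in> {..n} \<longrightarrow> f x \<in> {..n}) \<and> (x \<notin> {..n} \<longrightarrow> f x = 0)}"
  proof
    fix f assume f: "f \<in> partitions n"
    have "\<forall>x\<le>n. f x \<le> n"
    proof (intro allI impI)
      fix x assume "x \<le> n"
      show "f x \<le> n"
      proof (cases "x = 0")
        case True then show ?thesis using f by (simp add: partitions_def)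
      next
        case False
        have "x * f x \<le> (\<Sum>N\<le>n. N * f N)" using \<open>x \<le> n\<close> by (intro member_le_sum) auto
        then have "x * f x \<le> n" using f by (simp add: partitions_def)
        moreover have "f x \<le> x * f x" using False by simp
        ultimately show ?thesis by linarith
      qed
    qed
    then show "f \<in> {f. \<forall>x. (x \<in> {..n} \<longrightarrow> f x \<in> {..n}) \<and> (x \<notin> {..n} \<longrightarrow> f x = 0)}"
      using f by (auto simp: partitions_def)
  qed
  moreover have "finite {f. \<forall>x. (x \<in> {..n} \<longrightarrow> f x \<in> {..n}) \<and> (x \<notin> {..n} \<longrightarrow> f x = (0::nat))}"
    by (rule finite_set_of_finite_funs) auto
  ultimately show ?thesis by (rule finite_subset)
qed

definition Gs :: "nat \<Rightarrow> nat \<Rightarrow> (nat \<Rightarrow> nat) set" where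
  "Gs m s = partitions s \<inter> {g. dz m g = g}"
definition Zs :: "nat \<Rightarrow> nat \<Rightarrow> (nat \<Rightarrow> nat) set" where
  "Zs m t = partitions t \<inter> {h. dz m h = (\<lambda>_. 0)}"
definition Pg :: "nat \<Rightarrow> nat \<Rightarrow> (nat \<Rightarrow> nat) \<Rightarrow> (nat \<Rightarrow> nat) set" where
  "Pg m n g = partitions n \<inter> {f. dz m f = g}"

lemma inj_addf: "inj (addf g)"
  by (rule injI) (auto simp: addf_def fun_eq_iff)

lemma part_fsb: "f \<in> partitions n \<Longrightarrow> fsb f"
  unfolding fsb_def using part_bound by blast

lemma dz_le: "dz m f N \<le> f N"
  by (simp add: dz_def)

lemma K1:
  fixes m n s :: nat
  assumes "m \<ge> 2" "s \<le> n" "g \<in> Gs m s"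
  shows "Pg m n g = addf g ` Zs m (n - s)"
proof
  have g: "g \<in> partitions s" "dz m g = g" using assms(3) by (auto simp: Gs_def)
  have gb: "\<forall>N>n. g N = 0" using part_bound[OF g(1)] assms(2) by auto
  have gs: "g 0 = 0" "(\<Sum>N\<le>n. N * g N) = s" using part_iff[OF assms(2) gb] g(1) by auto
  show "Pg m n g \<subseteq> addf g ` Zs m (n - s)"
  proof
    fix f assume "f \<in> Pg m n g"
    then have f: "f \<in> partitions n" "dz m f = g" by (auto simp: Pg_def)
    define h where "h = (\<lambda>N. f N - g N)"
    have le: "\<And>N. g N \<le> f N" using f(2) dz_le by metis
    have fe: "f = addf g h" using le by (auto simp: addf_def h_def fun_eq_iff)
    have fb: "\<forall>N>n. f N = 0" using part_bound[OF f(1)] .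
    have hb: "\<forall>N>n. h N = 0" using fb by (simp add: h_def)
    have "(\<Sum>N\<le>n. N * h N) = (\<Sum>N\<le>n. N * f N - N * g N)" by (simp add: h_def diff_mult_distrib2)
    also have "\<dots> = (\<Sum>N\<le>n. N * f N) - (\<Sum>N\<le>n. N * g N)"
      by (rule sum_subtractf_nat) (use le in auto)
    also have "\<dots> = n - s" using f(1) gs part_iff[OF order.refl fb] by simp
    finally have hs: "(\<Sum>N\<le>n. N * h N) = n - s" .
    have h0: "h 0 = 0" using f(1) by (simp add: h_def partitions_def)
    have hp: "h \<in> partitions (n - s)" using part_iff[of "n - s" n h] hb hs h0 by simp
    have hdz: "dz m h = (\<lambda>_. 0)"
    proof
      fix N
      show "dz m h N = 0"
      proof (cases "m dvd N")
        case True then show ?thesis by (simp add: dz_def)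
      next
        case False
        then have "g N = f N mod m" using fun_cong[OF f(2), of N] by (simp add: dz_def)
        then have "h N = m * (f N div m)" by (simp add: h_def minus_mod_eq_mult_div)
        then show ?thesis by (simp add: dz_def)
      qed
    qed
    show "f \<in> addf g ` Zs m (n - s)" using fe hp hdz by (auto simp: Zs_def)
  qed
  show "addf g ` Zs m (n - s) \<subseteq> Pg m n g"
  proof
    fix f assume "f \<in> addf g ` Zs m (n - s)"
    then obtain h where h: "h \<in> partitions (n - s)" "dz m h = (\<lambda>_. 0)" and fe: "f = addf g h"
      by (auto simp: Zs_def)
    have hb: "\<forall>N>n. h N = 0" using part_bound[OF h(1)] by auto
    have hs: "h 0 = 0" "(\<Sum>N\<le>n. N * h N) = n - s" using part_iff[of "n - s" n h] hb h(1) by auto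
    have fb: "\<forall>N>n. f N = 0" using hb gb fe by (simp add: addf_def)
    have "(\<Sum>N\<le>n. N * f N) = (\<Sum>N\<le>n. N * g N) + (\<Sum>N\<le>n. N * h N)"
      by (simp add: fe addf_def distrib_left sum.distrib)
    then have "(\<Sum>N\<le>n. N * f N) = n" using gs hs assms(2) by simp
    then have "f \<in> partitions n" using part_iff[OF order.refl fb] gs hs fe by (simp add: addf_def)
    moreover have "dz m f = g" using fe dz_addf[OF g(2) h(2)] by simp
    ultimately show "f \<in> Pg m n g" by (simp add: Pg_def)
  qed
qed

lemma K2:
  fixes m n :: nat
  assumes "f \<in> partitions n"
  shows "\<exists>s\<le>n. dz m f \<in> Gs m s"
proof -
  define g where "g = dz m f"
  have fb: "\<forall>N>n. f N = 0" using part_bound[OF assms] .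
  have le: "\<And>N. g N \<le> f N" unfolding g_def by (rule dz_le)
  have gb: "\<forall>N>n. g N = 0" using fb le by (metis le_zero_eq)
  define s where "s = (\<Sum>N\<le>n. N * g N)"
  have "s \<le> (\<Sum>N\<le>n. N * f N)" unfolding s_def by (intro sum_mono) (simp add: le)
  then have sn: "s \<le> n" using assms part_iff[OF order.refl fb] by simp
  have g0: "g 0 = 0" by (simp add: g_def dz_def)
  have "g \<in> partitions s" using part_iff[OF sn gb] g0 s_def by simp
  moreover have "dz m g = g" unfolding g_def by (auto simp: dz_def fun_eq_iff)
  ultimately show ?thesis using sn g_def by (auto simp: Gs_def)
qed

lemma Zs_dvd:
  fixes m t :: nat
  assumes "h \<in> Zs m t" shows "m dvd t"
proof -
  have h: "h \<in> partitions t" "dz m h = (\<lambda>_. 0)" using assms by (auto simp: Zs_def)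
  have "t = (\<Sum>N\<le>t. N * h N)" using h(1) by (simp add: partitions_def)
  moreover have "m dvd (\<Sum>N\<le>t. N * h N)"
  proof (rule dvd_sum)
    fix N
    show "m dvd N * h N"
    proof (cases "m dvd N")
      case True then show ?thesis by simp
    next
      case False
      then have "h N mod m = 0" using fun_cong[OF h(2), of N] by (simp add: dz_def)
      then show ?thesis by auto
    qed
  qed
  ultimately show ?thesis by simp
qed

lemma Zs_0: "Zs m 0 = {\<lambda>_. 0}"
proof -
  have "partitions 0 = {\<lambda>_. 0}"
  proof (intro equalityI subsetI)
    fix f assume "f \<in> partitions 0"
    then have f0: "f 0 = 0" "\<forall>N>0. f N = 0" by (auto simp: partitions_def)
    have "f = (\<lambda>_. 0)"
    proof
      fix x show "f x = 0" using f0 by (cases x) auto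
    qed
    then show "f \<in> {\<lambda>_. 0}" by simp
  qed (simp add: partitions_def)
  moreover have "dz m (\<lambda>_. 0) = (\<lambda>_. 0)" by (simp add: dz_def fun_eq_iff)
  ultimately show ?thesis unfolding Zs_def by blast
qed

lemma partitions_disj:
  fixes s s' :: nat
  assumes "f \<in> partitions s" "f \<in> partitions s'" shows "s = s'"
proof -
  have b: "\<forall>N>max s s'. f N = 0" using part_bound[OF assms(1)] by simp
  have 1: "(\<Sum>N\<le>max s s'. N * f N) = s" using part_iff[OF max.cobounded1 b] assms(1) by blast
  have 2: "(\<Sum>N\<le>max s s'. N * f N) = s'" using part_iff[OF max.cobounded2 b] assms(2) by blast
  from 1 2 show ?thesis by simp
qed

lemma Gall_decomp:
  fixes m n :: nat
  assumes "m \<ge> 2"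
  shows "partitions n = (\<Union>g\<in>(\<Union>s\<in>{..n}. Gs m s). Pg m n g)"
proof
  show "partitions n \<subseteq> (\<Union>g\<in>(\<Union>s\<in>{..n}. Gs m s). Pg m n g)"
  proof
    fix f assume f: "f \<in> partitions n"
    obtain s where "s \<le> n" "dz m f \<in> Gs m s" using K2[OF f] by blast
    moreover have "f \<in> Pg m n (dz m f)" using f by (simp add: Pg_def)
    ultimately show "f \<in> (\<Union>g\<in>(\<Union>s\<in>{..n}. Gs m s). Pg m n g)" by blast
  qed
qed (auto simp: Pg_def)

lemma regroup:
  fixes m n :: nat
  shows "(\<Sum>g\<in>(\<Union>s\<in>{..n}. Gs m s). F g) = (\<Sum>s\<le>n. \<Sum>g\<in>Gs m s. F g)"
proof (rule sum.UNION_disjoint)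
  show "\<forall>i\<in>{..n}. \<forall>j\<in>{..n}. i \<noteq> j \<longrightarrow> Gs m i \<inter> Gs m j = {}"
    unfolding Gs_def using partitions_disj by blast
qed (auto simp: Gs_def finite_partitions)

lemma finite_Gall: "finite (\<Union>s\<in>{..n}. Gs m s)"
  by (auto simp: Gs_def finite_partitions)

lemma Gs_in: "g \<in> (\<Union>s\<in>{..n}. Gs m s) \<Longrightarrow> \<exists>s\<le>n. g \<in> Gs m s"
  by auto

lemma countA:
  fixes m n :: nat
  assumes "m \<ge> 2"
  shows "num_partitions n = (\<Sum>s\<le>n. card (Gs m s) * card (Zs m (n - s)))"
proof -
  have "num_partitions n = card (\<Union>g\<in>(\<Union>s\<in>{..n}. Gs m s). Pg m n g)"
    unfolding num_partitions_def using Gall_decomp[OF assms] by simp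
  also have "\<dots> = (\<Sum>g\<in>(\<Union>s\<in>{..n}. Gs m s). card (Pg m n g))"
    by (rule card_UN_disjoint) (auto simp: finite_Gall Pg_def finite_partitions)
  also have "\<dots> = (\<Sum>s\<le>n. \<Sum>g\<in>Gs m s. card (Pg m n g))" by (rule regroup)
  also have "\<dots> = (\<Sum>s\<le>n. \<Sum>g\<in>Gs m s. card (Zs m (n - s)))"
  proof (intro sum.cong refl)
    fix s g assume "s \<in> {..n}" "g \<in> Gs m s"
    then show "card (Pg m n g) = card (Zs m (n - s))"
      using K1[OF assms, of s n g] card_image[OF inj_on_subset[OF inj_addf subset_UNIV]] by simp
  qed
  also have "\<dots> = (\<Sum>s\<le>n. card (Gs m s) * card (Zs m (n - s)))" by simp
  finally show ?thesis .
qed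

lemma countB:
  fixes m n k :: nat
  assumes "m \<ge> 2"
  shows "orbit_count m n k = (\<Sum>s\<le>n. card (Gs m s) * card {Y \<in> rho_orbit m ` Zs m (n - s). card Y = k})"
proof -
  let ?G = "\<Union>s\<in>{..n}. Gs m s"
  define T where "T g = {X \<in> rho_orbit m ` Pg m n g. card X = k}" for g
  have orbdz: "\<And>g f x. g \<in> ?G \<Longrightarrow> f \<in> Pg m n g \<Longrightarrow> x \<in> rho_orbit m f \<Longrightarrow> dz m x = g"
  proof -
    fix g f x assume g: "g \<in> ?G" and f: "f \<in> Pg m n g" and x: "x \<in> rho_orbit m f"
    obtain s where s: "s \<le> n" "g \<in> Gs m s" using g by auto
    then obtain h where h: "h \<in> Zs m (n - s)" "f = addf g h" using K1[OF assms s] f by auto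
    show "dz m x = g"
      using orbit_dz[OF assms, of g h x] h s(2) x part_fsb by (auto simp: Gs_def Zs_def)
  qed
  have "{X \<in> rho_orbit m ` partitions n. card X = k} = (\<Union>g\<in>?G. T g)"
    unfolding T_def using Gall_decomp[OF assms, of n] by auto
  then have "orbit_count m n k = card (\<Union>g\<in>?G. T g)" by (simp add: orbit_count_def)
  also have "\<dots> = (\<Sum>g\<in>?G. card (T g))"
  proof (rule card_UN_disjoint)
    show "finite ?G" by (rule finite_Gall)
    show "\<forall>g\<in>?G. finite (T g)" by (auto simp: T_def Pg_def finite_partitions)
    show "\<forall>g\<in>?G. \<forall>g'\<in>?G. g \<noteq> g' \<longrightarrow> T g \<inter> T g' = {}"
    proof (intro ballI impI)
      fix g g' assume gg: "g \<in> ?G" "g' \<in> ?G" "g \<noteq> g'"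
      show "T g \<inter> T g' = {}"
      proof (rule ccontr)
        assume "T g \<inter> T g' \<noteq> {}"
        then obtain f f' where f: "f \<in> Pg m n g" "f' \<in> Pg m n g'" "rho_orbit m f = rho_orbit m f'"
          by (auto simp: T_def)
        have "f' \<in> rho_orbit m f'" unfolding rho_orbit_def by (auto intro: exI[of _ 0])
        then have "dz m f' = g" using orbdz[OF gg(1) f(1)] f(3) by simp
        moreover have "dz m f' = g'" using f(2) by (simp add: Pg_def)
        ultimately show False using gg(3) by simp
      qed
    qed
  qed
  also have "\<dots> = (\<Sum>s\<le>n. \<Sum>g\<in>Gs m s. card (T g))" by (rule regroup)
  also have "\<dots> = (\<Sum>s\<le>n. \<Sum>g\<in>Gs m s. card {Y \<in> rho_orbit m ` Zs m (n - s). card Y = k})"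
  proof (intro sum.cong refl)
    fix s g assume s: "s \<in> {..n}" "g \<in> Gs m s"
    then have sn: "s \<le> n" by simp
    have gdz: "dz m g = g" using s(2) by (simp add: Gs_def)
    let ?phi = "\<lambda>Y. addf g ` Y"
    have injphi: "inj ?phi" by (rule injI) (simp add: inj_image_eq_iff[OF inj_addf])
    have cardphi: "\<And>Y. card (?phi Y) = card Y"
      using card_image[OF inj_on_subset[OF inj_addf subset_UNIV]] by blast
    have orb: "\<And>h. h \<in> Zs m (n - s) \<Longrightarrow> rho_orbit m (addf g h) = ?phi (rho_orbit m h)"
      using orbit_add[OF assms gdz] part_fsb by (auto simp: Zs_def)
    have "rho_orbit m ` Pg m n g = ?phi ` (rho_orbit m ` Zs m (n - s))"
      using K1[OF assms sn s(2)] orb by (auto simp: image_image)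
    then have "T g = ?phi ` {Y \<in> rho_orbit m ` Zs m (n - s). card Y = k}"
      unfolding T_def using cardphi by auto
    then show "card (T g) = card {Y \<in> rho_orbit m ` Zs m (n - s). card Y = k}"
      using card_image[OF inj_on_subset[OF injphi subset_UNIV]] by simp
  qed
  also have "\<dots> = (\<Sum>s\<le>n. card (Gs m s) * card {Y \<in> rho_orbit m ` Zs m (n - s). card Y = k})" by simp
  finally show ?thesis .
qed

lemma term_dvd:
  fixes m A B C N s :: nat
  assumes "A dvd m" "s \<le> N" "N mod A = B"
    and IH: "s mod A = B \<Longrightarrow> C dvd card (Gs m s)"
    and Z: "\<And>t. Zs m t = {} \<Longrightarrow> X t = 0"
  shows "C dvd card (Gs m s) * X (N - s)"
proof (cases "Zs m (N - s) = {}")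
  case True then show ?thesis using Z by simp
next
  case False
  then obtain h where "h \<in> Zs m (N - s)" by auto
  then have "m dvd N - s" by (rule Zs_dvd)
  then have "A dvd N - s" using dvd_trans[OF assms(1)] by blast
  then have "N mod A = s mod A" using mod_eq_dvd_iff_nat[OF assms(2)] by simp
  then show ?thesis using IH assms(3) by simp
qed

lemma qdiv:
  fixes m A B C :: nat
  assumes "m \<ge> 2" "A dvd m" "\<forall>n. C dvd num_partitions (A * n + B)" "B < A"
  shows "N mod A = B \<Longrightarrow> C dvd card (Gs m N)"
proof (induction N rule: less_induct)
  case (less N)
  have "N div A * A + N mod A = N" by (rule div_mult_mod_eq)
  then have "A * (N div A) + B = N" using less.prems by (simp add: ac_simps)
  then have pN: "C dvd num_partitions N" using assms(3) by metis
  have "{..N} = insert N {..<N}" by auto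
  then have "num_partitions N = card (Gs m N) * card (Zs m (N - N)) + (\<Sum>s<N. card (Gs m s) * card (Zs m (N - s)))"
    using countA[OF assms(1), of N] by simp
  also have "card (Zs m (N - N)) = 1" by (simp add: Zs_0)
  finally have e: "num_partitions N = card (Gs m N) + (\<Sum>s<N. card (Gs m s) * card (Zs m (N - s)))" by simp
  have "C dvd (\<Sum>s<N. card (Gs m s) * card (Zs m (N - s)))"
  proof (rule dvd_sum)
    fix s assume "s \<in> {..<N}"
    then have s: "s < N" by simp
    show "C dvd card (Gs m s) * card (Zs m (N - s))"
      by (rule term_dvd[OF assms(2) _ less.prems, where X = "\<lambda>t. card (Zs m t)"]) (use s less.IH in auto)
  qed
  then show ?case using pN e by (simp add: dvd_add_left_iff)
qed

theorem theorem2: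
  fixes m A B C :: nat
  assumes "m \<ge> 2" and "A \<ge> 1" and "C \<ge> 1"
    and "\<forall>n. C dvd num_partitions (A * n + B)"
    and "B < A" and "A dvd m"
  shows "\<forall>k n. k > 0 \<longrightarrow> C dvd orbit_count m (A * n + B) k"
proof (intro allI impI)
  fix k n :: nat
  define N where "N = A * n + B"
  have Nm: "N mod A = B" using assms(5) by (simp add: N_def)
  have "C dvd (\<Sum>s\<le>N. card (Gs m s) * card {Y \<in> rho_orbit m ` Zs m (N - s). card Y = k})"
  proof (rule dvd_sum)
    fix s assume "s \<in> {..N}"
    then have s: "s \<le> N" by simp
    show "C dvd card (Gs m s) * card {Y \<in> rho_orbit m ` Zs m (N - s). card Y = k}"
      by (rule term_dvd[OF assms(6) s Nm, where X = "\<lambda>t. card {Y \<in> rho_orbit m ` Zs m t. card Y = k}"])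
         (use qdiv[OF assms(1,6,4,5)] in auto)
  qed
  then show "C dvd orbit_count m (A * n + B) k" using countB[OF assms(1), of N k] by (simp add: N_def)
qed

end
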